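(* Let $D$ be a distribution over $\mathcal{X}\times\mathcal{Y}$ ($\mathcal{X}\subset\mathbb{R}^d$, $\mathcal{Y}=\{1,\dots,c\}$) that is $(k_1,\dots,k_n)$-separable with $\delta$-margin by unit projection vectors $a_1,\dots,a_n\in\mathbb{R}^d$. Then there exists a 2-layer network $p:\mathcal{X}\to\mathbb{R}^n$, $p(x)=(p^1(x),\dots,p^n(x))^T$, where each coordinate is of the form $$p^s(x)=\sum_{l=1}^{k_s} v_{s,l}\,\rho\big(u_s^Tx-\beta_{s,l}\big),\qquad u_s\in\mathbb{R}^d,\ \beta_{s,l},v_{s,l}\in\mathbb{R},$$ such that, when $(x,y)\sim D$, the distribution $D'$ of $(p(x),y)$ over $\mathbb{R}^n\times\mathcal{Y}$ is $\big(\prod_{s=1}^n k_s\big)$-separable with $\frac{1}{4\sqrt n}$-margin, witnessed by the projection vector $a=\frac{1}{\sqrt n}(1,1,\dots,1)^T\in\mathbb{R}^n$.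
   Context: $\rho(t)=1/(1+e^{-t})$ is the sigmoid function. Definition ($k$-separable with $\delta$-margin): Let $\mathcal{X}\subset\mathbb{R}^d$ and $\mathcal{Y}=\{1,\dots,c\}$. A distribution $D$ over $\mathcal{X}\times\mathcal{Y}$ is $k$-separable with $\delta$-margin ($\delta>0$) if there exist a projection vector $a\in\mathbb{R}^d$ with $\|a\|_2=1$ and constants $b_1<b_2<\cdots<b_{k+1}$ such that, setting $\mathcal{X}_i=\{x\in\mathcal{X}: b_i+\delta<a^Tx<b_{i+1}-\delta\}$ for $i\in\{1,\dots,k\}$: (i) for each $i$ there is $y_i\in\mathcal{Y}$ with $\mathbb{P}_{(x,y)\sim D}(y=y_i\mid x\in\mathcal{X}_i)=1$; (ii) $\mathbb{P}_{(x,y)\sim D}\big(x\in\bigcup_{i=1}^k\mathcal{X}_i\big)=1$. (Here the ambient space may be any $\mathbb{R}^{d}$, in particular $\mathbb{R}^n$.) Definition ($(k_1,\dots,k_n)$-separable with $\delta$-margin): $D$ over $\mathcal{X}\times\mathcal{Y}$ is $(k_1,\dots,k_n)$-separable with $\delta$-margin ($\delta>0$) if there exist $a_1,\dots,a_n\in\mathbb{R}^d$ with $\|a_s\|_2=1$ and constants $b_{s,1}<b_{s,2}<\cdots<b_{s,k_s+1}$ for each $s\in\{1,\dots,n\}$ such that, for each multi-index $\mathbf{i}=(i_1,\dots,i_n)$ with $i_s\in\{1,\dots,k_s\}$ and $\mathcal{X}_{\mathbf{i}}=\{x\in\mathcal{X}: b_{s,i_s}+\delta<a_s^Tx<b_{s,i_s+1}-\delta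 \text{ for all } 1\le s\le n\}$: (i) there is $y_{\mathbf{i}}\in\mathcal{Y}$ with $\mathbb{P}_{(x,y)\sim D}(y=y_{\mathbf{i}}\mid x\in\mathcal{X}_{\mathbf{i}})=1$; (ii) $\mathbb{P}_{(x,y)\sim D}\big(x\in\bigcup_{\mathbf{i}}\mathcal{X}_{\mathbf{i}}\big)=1$. *)

theory Defs
  imports "HOL-Probability.Probability"
begin

definition sigmoid :: "real \<Rightarrow> real" where
  "sigmoid t = 1 / (1 + exp (- t))"

text \<open>P(y = y_i | x \<in> X_i) = 1 is rendered as P(x \<in> X_i \<and> y = y_i) = P(x \<in> X_i).\<close>
definition k_separable_by ::
  "('a::euclidean_space \<times> nat) measure \<Rightarrow> nat \<Rightarrow> real \<Rightarrow> 'a \<Rightarrow> bool" where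
  "k_separable_by D k \<delta> a \<longleftrightarrow>
     \<delta> > 0 \<and> norm a = 1 \<and>
     (\<exists>b :: nat \<Rightarrow> real.
        (\<forall>j\<in>{1..k}. b j < b (Suc j)) \<and>
        (\<forall>i\<in>{1..k}. \<exists>yi.
           measure D {z \<in> space D. b i + \<delta> < a \<bullet> fst z \<and> a \<bullet> fst z < b (Suc i) - \<delta> \<and> snd z = yi}
         = measure D {z \<in> space D. b i + \<delta> < a \<bullet> fst z \<and> a \<bullet> fst z < b (Suc i) - \<delta>}) \<and>
        measure D {z \<in> space D. \<exists>i\<in>{1..k}. b i + \<delta> < a \<bullet> fst z \<and> a \<bullet> fst z < b (Suc i) - \<delta>} = 1)"

text \<open>(k_1,...,k_n)-separable with delta-margin, witnessed by projection vectors a_s;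
  the coordinates s range over a finite type 'n (n = CARD('n)); multi-indices are
  functions i :: 'n \<Rightarrow> nat with 1 \<le> i s \<le> k s.\<close>
definition multi_separable_by ::
  "('a::euclidean_space \<times> nat) measure \<Rightarrow> ('n::finite \<Rightarrow> nat) \<Rightarrow> real \<Rightarrow> ('n \<Rightarrow> 'a) \<Rightarrow> bool" where
  "multi_separable_by D k \<delta> a \<longleftrightarrow>
     \<delta> > 0 \<and> (\<forall>s. norm (a s) = 1) \<and>
     (\<exists>b :: 'n \<Rightarrow> nat \<Rightarrow> real.
        (\<forall>s. \<forall>j\<in>{1..k s}. b s j < b s (Suc j)) \<and>
        (\<forall>i :: 'n \<Rightarrow> nat. (\<forall>s. i s \<in> {1..k s}) \<longrightarrow> (\<exists>yi.
           measure D {z \<in> space D. (\<forall>s. b s (i s) + \<delta> < a s \<bullet> fst z \<and> a s \<bullet> fst z < b s (Suc (i s)) - \<delta>) \<and> snd z = yi}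
         = measure D {z \<in> space D. (\<forall>s. b s (i s) + \<delta> < a s \<bullet> fst z \<and> a s \<bullet> fst z < b s (Suc (i s)) - \<delta>)})) \<and>
        measure D {z \<in> space D. \<exists>i :: 'n \<Rightarrow> nat. (\<forall>s. i s \<in> {1..k s}) \<and>
            (\<forall>s. b s (i s) + \<delta> < a s \<bullet> fst z \<and> a s \<bullet> fst z < b s (Suc (i s)) - \<delta>)} = 1)"

end

theory Submission
  imports Defs
begin

lemma radix_bound:
  fixes d kk :: "nat \<Rightarrow> nat"
  assumes "\<forall>j<m. d j < kk j"
  shows "(\<Sum>j<m. d j * (\<Prod>i<j. kk i)) < (\<Prod>i<m. kk i)"
  using assms
proof (induction m)
  case 0 then show ?case by simp
next
  case (Suc m)
  have IH: "(\<Sum>j<m. d j * (\<Prod>i<j. kk i)) < (\<Prod>i<m. kk i)" using Suc by auto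
  have dm: "d m + 1 \<le> kk m" using Suc.prems by auto
  have "(\<Sum>j<Suc m. d j * (\<Prod>i<j. kk i)) = (\<Sum>j<m. d j * (\<Prod>i<j. kk i)) + d m * (\<Prod>i<m. kk i)" by simp
  also have "\<dots> < (\<Prod>i<m. kk i) + d m * (\<Prod>i<m. kk i)" using IH by simp
  also have "\<dots> = (d m + 1) * (\<Prod>i<m. kk i)" by simp
  also have "\<dots> \<le> kk m * (\<Prod>i<m. kk i)" using dm by (intro mult_right_mono) auto
  also have "\<dots> = (\<Prod>i<Suc m. kk i)" by (simp add: mult.commute)
  finally show ?case .
qed

lemma radix_inj:
  fixes d d' kk :: "nat \<Rightarrow> nat"
  assumes "\<forall>j<m. d j < kk j \<and> d' j < kk j"
    and "(\<Sum>j<m. d j * (\<Prod>i<j. kk i)) = (\<Sum>j<m. d' j * (\<Prod>i<j. kk i))"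
  shows "\<forall>j<m. d j = d' j"
  using assms
proof (induction m)
  case 0 then show ?case by simp
next
  case (Suc m)
  define P where "P = (\<Prod>i<m. kk i)"
  define S where "S = (\<Sum>j<m. d j * (\<Prod>i<j. kk i))"
  define S' where "S' = (\<Sum>j<m. d' j * (\<Prod>i<j. kk i))"
  have b1: "S < P" unfolding S_def P_def by (rule radix_bound) (use Suc.prems in auto)
  have b2: "S' < P" unfolding S'_def P_def by (rule radix_bound) (use Suc.prems in auto)
  have eq: "S + d m * P = S' + d' m * P" using Suc.prems(2) unfolding S_def S'_def P_def by simp
  have Ppos: "P > 0" using b1 by simp
  have "(S + d m * P) div P = d m" using b1 Ppos by simp
  moreover have "(S' + d' m * P) div P = d' m" using b2 Ppos by simp
  ultimately have dm: "d m = d' m" using eq by simp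
  with eq have "S = S'" by simp
  have pm: "\<forall>j<m. d j < kk j \<and> d' j < kk j" using Suc.prems(1) by simp
  have "\<forall>j<m. d j = d' j" using Suc.IH[OF pm] \<open>S = S'\<close> unfolding S_def S'_def by blast
  with dm show ?case using less_Suc_eq by auto
qed

lemma bmono:
  fixes b :: "nat \<Rightarrow> real"
  assumes "\<forall>j\<in>{1..k}. b j < b (Suc j)" "1 \<le> p" "p \<le> q" "q \<le> Suc k"
  shows "b p \<le> b q"
  using assms(3,4)
proof (induction q)
  case 0 then show ?case using assms(2) by simp
next
  case (Suc q)
  show ?case
  proof (cases "p = Suc q")
    case True then show ?thesis by simp
  next
    case False
    then have "p \<le> q" using Suc.prems by simp
    then have "b p \<le> b q" using Suc by simp
    moreover have "b q < b (Suc q)" using assms(1) \<open>p \<le> q\<close> assms(2) Suc.prems by auto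
    ultimately show ?thesis by simp
  qed
qed

lemma sig_le_exp: "sigmoid t \<le> exp t"
proof -
  have "1 / (1 + exp (- t)) \<le> 1 / exp (- t)"
    by (intro divide_left_mono) (auto simp: add_pos_pos)
  also have "1 / exp (- t) = exp t" by (simp add: exp_minus field_simps)
  finally show ?thesis unfolding sigmoid_def .
qed

lemma sig_neg: "sigmoid (- t) = 1 - sigmoid t"
proof -
  have p: "1 + exp (- t) > 0" "1 + exp t > 0" by (auto simp: add_pos_pos)
  have "exp t * exp (-t) = 1" by (simp add: exp_minus)
  then show ?thesis using p unfolding sigmoid_def by (simp add: field_simps)
qed

lemma sig_bounds: "0 \<le> sigmoid t" "sigmoid t \<le> 1"
  unfolding sigmoid_def by (auto simp: add_pos_pos)

lemma sig_hi:
  assumes "T \<le> t" "exp (- T) = \<epsilon>"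
  shows "\<bar>sigmoid t - 1\<bar> \<le> \<epsilon>"
proof -
  have "1 - sigmoid t = sigmoid (- t)" by (simp add: sig_neg)
  also have "\<dots> \<le> exp (- t)" by (rule sig_le_exp)
  also have "\<dots> \<le> exp (- T)" using assms(1) by simp
  finally show ?thesis using sig_bounds[of t] assms(2) by simp
qed

lemma sig_lo:
  assumes "t \<le> - T" "exp (- T) = \<epsilon>"
  shows "\<bar>sigmoid t\<bar> \<le> \<epsilon>"
proof -
  have "sigmoid t \<le> exp t" by (rule sig_le_exp)
  also have "\<dots> \<le> exp (- T)" using assms(1) by simp
  finally show ?thesis using sig_bounds[of t] assms(2) by simp
qed

lemma coord_approx:
  fixes b :: "nat \<Rightarrow> real"
  assumes mono: "\<forall>j\<in>{1..k}. b j < b (Suc j)" and i: "1 \<le> i" "i \<le> k"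
    and y: "b i + \<delta> < y" "y < b (Suc i) - \<delta>" and dpos: "\<delta> > 0"
    and lam: "lm = T / \<delta>" and T: "T \<ge> 0" and eps: "exp (- T) = \<epsilon>" and W: "W \<ge> 0"
  shows "\<bar>(\<Sum>l=1..k. (if l < k then W else 0) * sigmoid (lm * y - lm * b (Suc l))) - W * real (i - 1)\<bar>
          \<le> real k * (W * \<epsilon>)"
proof -
  have lT: "lm * \<delta> = T" using lam dpos by simp
  have tgt: "(\<Sum>l=1..k. (if l < k then W else 0) * (if l < i then 1 else 0)) = W * real (i - 1)"
  proof -
    have "(\<Sum>l=1..k. (if l < k then W else 0) * (if l < i then 1 else 0)) = (\<Sum>l=1..k. (if l < i then W else 0))"
      using i by (intro sum.cong) auto
    also have "\<dots> = (\<Sum>l\<in>{l\<in>{1..k}. l < i}. W)" by (rule sum.inter_filter[symmetric]) simp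
    also have "{l\<in>{1..k}. l < i} = {1..<i}" using i by auto
    finally show ?thesis by simp
  qed
  have tm: "\<bar>(if l < k then W else 0) * sigmoid (lm * y - lm * b (Suc l)) - (if l < k then W else 0) * (if l < i then 1 else 0)\<bar> \<le> W * \<epsilon>"
    if l: "l \<in> {1..k}" for l
  proof (cases "l < k")
    case False then show ?thesis using W eps[symmetric] by simp
  next
    case lk: True
    have lpos: "lm \<ge> 0" using lam dpos T by simp
    show ?thesis
    proof (cases "l < i")
      case True
      have "b (Suc l) \<le> b i" using bmono[OF mono, of "Suc l" i] True i by simp
      then have "y - b (Suc l) \<ge> \<delta>" using y by simp
      then have "lm * (y - b (Suc l)) \<ge> lm * \<delta>" using lpos by (intro mult_left_mono) auto
      then have "T \<le> lm * y - lm * b (Suc l)" using lT by (simp add: algebra_simps)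
      from sig_hi[OF this eps] have "\<bar>sigmoid (lm * y - lm * b (Suc l)) - 1\<bar> \<le> \<epsilon>" .
      then have "W * \<bar>sigmoid (lm * y - lm * b (Suc l)) - 1\<bar> \<le> W * \<epsilon>" using W by (intro mult_left_mono)
      moreover have "W * \<bar>sigmoid (lm * y - lm * b (Suc l)) - 1\<bar> = \<bar>W * sigmoid (lm * y - lm * b (Suc l)) - W\<bar>"
      proof -
        have "W * sigmoid (lm * y - lm * b (Suc l)) - W = W * (sigmoid (lm * y - lm * b (Suc l)) - 1)"
          by (simp add: right_diff_distrib)
        then show ?thesis using W by (simp add: abs_mult)
      qed
      ultimately show ?thesis using lk True W by simp
    next
      case False
      have "b (Suc i) \<le> b (Suc l)" using bmono[OF mono, of "Suc i" "Suc l"] False lk by simp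
      then have "y - b (Suc l) \<le> - \<delta>" using y by simp
      then have "lm * (y - b (Suc l)) \<le> lm * (- \<delta>)" using lpos by (intro mult_left_mono) auto
      then have "lm * y - lm * b (Suc l) \<le> - T" using lT by (simp add: algebra_simps)
      from sig_lo[OF this eps] have "\<bar>sigmoid (lm * y - lm * b (Suc l))\<bar> \<le> \<epsilon>" .
      then have "W * \<bar>sigmoid (lm * y - lm * b (Suc l))\<bar> \<le> W * \<epsilon>" using W by (intro mult_left_mono)
      then show ?thesis using lk False W by (simp add: abs_mult)
    qed
  qed
  have "\<bar>(\<Sum>l=1..k. (if l < k then W else 0) * sigmoid (lm * y - lm * b (Suc l))) - W * real (i - 1)\<bar>
      = \<bar>\<Sum>l=1..k. ((if l < k then W else 0) * sigmoid (lm * y - lm * b (Suc l)) - (if l < k then W else 0) * (if l < i then 1 else 0))\<bar>"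
    by (subst sum_subtractf) (simp only: tgt)
  also have "\<dots> \<le> (\<Sum>l=1..k. \<bar>(if l < k then W else 0) * sigmoid (lm * y - lm * b (Suc l)) - (if l < k then W else 0) * (if l < i then 1 else 0)\<bar>)"
    by (rule sum_abs)
  also have "\<dots> \<le> real (card {1..k}) * (W * \<epsilon>)"
    by (rule sum_bounded_above) (use tm in auto)
  finally show ?thesis by simp
qed

lemma full_inter:
  assumes "prob_space M" "U \<in> sets M" "measure M U = 1" "A \<in> sets M"
  shows "measure M (A \<inter> U) = measure M A"
proof -
  interpret prob_space M by fact
  have "measure M (space M - U) = 0" using assms prob_compl by simp
  hence "space M - U \<in> null_sets M"
    using assms by (simp add: emeasure_eq_measure null_sets_def)
  hence "measure M (A - (space M - U)) = measure M A" using assms measure_Diff_null_set by blast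
  moreover have "A - (space M - U) = A \<inter> U" using sets.sets_into_space[OF assms(4)] by auto
  ultimately show ?thesis by simp
qed

lemma cont_sig: "continuous_on UNIV sigmoid"
  unfolding sigmoid_def
  by (intro continuous_intros) (smt (verit) exp_gt_zero)

lemma meas_sig[measurable]: "sigmoid \<in> borel_measurable borel"
  by (rule borel_measurable_continuous_onI[OF cont_sig])

lemma meas_f:
  fixes u :: "'n::finite \<Rightarrow> real ^ 'd::finite"
  shows "(\<lambda>x. (\<chi> s. \<Sum>l=1..k s. v s l * sigmoid (u s \<bullet> x - \<beta> s l)) :: real ^ 'n) \<in> borel_measurable borel"
  apply (rule borel_measurable_continuous_onI)
  apply (intro continuous_intros continuous_on_compose2[OF cont_sig])
  by auto

lemma int_lemma:
  fixes x :: real and m j :: nat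
  assumes "\<bar>x - real m\<bar> \<le> 1/8" "real j - 5/4 < x" "x < real j - 3/4"
  shows "m = j - 1"
proof -
  have "real m < real j" using assms by linarith
  hence "m < j" by simp
  moreover have "real j < real m + 2" using assms by linarith
  hence "j < m + 2" by linarith
  ultimately show ?thesis by linarith
qed


theorem lemma1:
  fixes D :: "((real ^ 'd::finite) \<times> nat) measure"
    and c :: nat
    and k :: "'n::finite \<Rightarrow> nat"
    and \<delta> :: real
    and a :: "'n \<Rightarrow> real ^ 'd"
  assumes "prob_space D"
    and "sets D = sets (borel \<Otimes>\<^sub>M count_space UNIV)"
    and "measure D {z \<in> space D. snd z \<in> {1..c}} = 1"
    and "multi_separable_by D k \<delta> a"
  shows "\<exists>(u :: 'n \<Rightarrow> real ^ 'd) (\<beta> :: 'n \<Rightarrow> nat \<Rightarrow> real) (v :: 'n \<Rightarrow> nat \<Rightarrow> real).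
           k_separable_by
             (distr D (borel \<Otimes>\<^sub>M count_space UNIV)
                (\<lambda>z. ((\<chi> s. \<Sum>l=1..k s. v s l * sigmoid (u s \<bullet> fst z - \<beta> s l)) :: real ^ 'n, snd z)))
             (\<Prod>s\<in>UNIV. k s)
             (1 / (4 * sqrt (real CARD('n))))
             ((\<chi> s. 1 / sqrt (real CARD('n))) :: real ^ 'n)"
proof -
  interpret P: prob_space D by fact
  let ?N = "borel \<Otimes>\<^sub>M count_space UNIV :: ((real^'d) \<times> nat) measure"
  let ?M = "borel \<Otimes>\<^sub>M count_space UNIV :: ((real^'n) \<times> nat) measure"
  have spN: "space ?N = UNIV" by (simp add: space_pair_measure)
  have spM: "space ?M = UNIV" by (simp add: space_pair_measure)
  have spD: "space D = UNIV" using sets_eq_imp_space_eq[OF assms(2)] spN by simp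
  have setsD: "\<And>A. A \<in> sets ?N \<Longrightarrow> A \<in> sets D" using assms(2) by simp
  obtain b where dpos: "\<delta> > 0"
     and bm: "\<forall>s. \<forall>j\<in>{1..k s}. b s j < b s (Suc j)"
     and blab: "\<forall>i :: 'n \<Rightarrow> nat. (\<forall>s. i s \<in> {1..k s}) \<longrightarrow> (\<exists>yi.
           measure D {z \<in> space D. (\<forall>s. b s (i s) + \<delta> < a s \<bullet> fst z \<and> a s \<bullet> fst z < b s (Suc (i s)) - \<delta>) \<and> snd z = yi}
         = measure D {z \<in> space D. (\<forall>s. b s (i s) + \<delta> < a s \<bullet> fst z \<and> a s \<bullet> fst z < b s (Suc (i s)) - \<delta>)})"
     and bfull: "measure D {z \<in> space D. \<exists>i :: 'n \<Rightarrow> nat. (\<forall>s. i s \<in> {1..k s}) \<and>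
            (\<forall>s. b s (i s) + \<delta> < a s \<bullet> fst z \<and> a s \<bullet> fst z < b s (Suc (i s)) - \<delta>)} = 1"
    using assms(4) unfolding multi_separable_by_def by blast
  define R where "R i = {z \<in> space D. \<forall>s. b s (i s) + \<delta> < a s \<bullet> fst z \<and> a s \<bullet> fst z < b s (Suc (i s)) - \<delta>}" for i :: "'n \<Rightarrow> nat"
  define RY where "RY i y = {z \<in> space D. (\<forall>s. b s (i s) + \<delta> < a s \<bullet> fst z \<and> a s \<bullet> fst z < b s (Suc (i s)) - \<delta>) \<and> snd z = y}" for i :: "'n \<Rightarrow> nat" and y
  define mi where "mi = {i::'n\<Rightarrow>nat. \<forall>s. i s \<in> {1..k s}}"
  define U where "U = {z \<in> space D. \<exists>i\<in>mi. z \<in> R i}"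
  have Ueq: "U = {z \<in> space D. \<exists>i :: 'n \<Rightarrow> nat. (\<forall>s. i s \<in> {1..k s}) \<and>
            (\<forall>s. b s (i s) + \<delta> < a s \<bullet> fst z \<and> a s \<bullet> fst z < b s (Suc (i s)) - \<delta>)}"
    unfolding U_def mi_def R_def by auto
  have mU: "measure D U = 1" using bfull Ueq by simp
  have Usets: "U \<in> sets D"
  proof (rule ccontr)
    assume "U \<notin> sets D" then have "measure D U = 0" by (simp add: measure_notin_sets)
    then show False using mU by simp
  qed
  have kpos: "1 \<le> k s" for s
  proof (rule ccontr)
    assume "\<not> 1 \<le> k s"
    then have "U = {}" unfolding U_def mi_def by (auto, metis le_trans)
    then show False using mU by simp
  qed
  define n where "n = CARD('n)"
  have npos: "n > 0" unfolding n_def by simp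
  obtain e where e: "bij_betw e (UNIV::'n set) {0..<n}"
    using ex_bij_betw_finite_nat[of "UNIV::'n set"] n_def by auto
  define g where "g = inv_into UNIV e"
  have ge: "g (e s) = s" for s unfolding g_def using bij_betw_inv_into_left[OF e] by simp
  have eg: "j < n \<Longrightarrow> e (g j) = j" for j unfolding g_def using bij_betw_inv_into_right[OF e] by simp
  define kk where "kk j = k (g j)" for j
  define Pr where "Pr m = (\<Prod>i<m. kk i)" for m
  define W where "W s = Pr (e s)" for s
  define V where "V i = (\<Sum>s\<in>UNIV. (i s - 1) * W s)" for i :: "'n \<Rightarrow> nat"
  have Valt: "V i = (\<Sum>j<n. (i (g j) - 1) * Pr j)" for i
    unfolding V_def W_def using sum.reindex_bij_betw[OF e, of "\<lambda>j. (i (g j) - 1) * Pr j"]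
    by (simp add: ge atLeast0LessThan)
  have Kalt: "(\<Prod>s\<in>UNIV. k s) = Pr n"
    using prod.reindex_bij_betw[OF e, of kk] by (simp add: kk_def ge Pr_def atLeast0LessThan)
  have Vlt: "V i < (\<Prod>s\<in>UNIV. k s)" if "i \<in> mi" for i
    unfolding Valt Kalt Pr_def
  proof (rule radix_bound)
    show "\<forall>j<n. i (g j) - 1 < kk j"
    proof (intro allI impI)
      fix j have "i (g j) \<in> {1..k (g j)}" using that unfolding mi_def by blast
      then show "i (g j) - 1 < kk j" unfolding kk_def by auto
    qed
  qed
  have Vinj: "i = i'" if "i \<in> mi" "i' \<in> mi" "V i = V i'" for i i'
  proof -
    have "\<forall>j<n. i (g j) - 1 = i' (g j) - 1"
    proof (rule radix_inj)
      show "\<forall>j<n. i (g j) - 1 < kk j \<and> i' (g j) - 1 < kk j"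
      proof (intro allI impI)
        fix j have "i (g j) \<in> {1..k (g j)}" "i' (g j) \<in> {1..k (g j)}" using that(1,2) unfolding mi_def by blast+
        then show "i (g j) - 1 < kk j \<and> i' (g j) - 1 < kk j" unfolding kk_def by auto
      qed
      show "(\<Sum>j<n. (i (g j) - 1) * (\<Prod>i<j. kk i)) = (\<Sum>j<n. (i' (g j) - 1) * (\<Prod>i<j. kk i))"
        using that(3) unfolding Valt Pr_def by simp
    qed
    show ?thesis
    proof
      fix s
      have "e s < n" using e by (auto simp: bij_betw_def)
      then have "i (g (e s)) - 1 = i' (g (e s)) - 1" using \<open>\<forall>j<n. _\<close> by blast
      then have "i s - 1 = i' s - 1" by (simp add: ge)
      moreover have "1 \<le> i s" "1 \<le> i' s" using that unfolding mi_def by auto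
      ultimately show "i s = i' s" by simp
    qed
  qed
  define C where "C = (\<Sum>s\<in>UNIV. real (k s) * real (W s))"
  have C0: "C \<ge> 0" unfolding C_def by (intro sum_nonneg) simp
  define \<epsilon> where "\<epsilon> = 1 / (8 * (C + 1))"
  have eps0: "\<epsilon> > 0" "\<epsilon> \<le> 1" using C0 unfolding \<epsilon>_def by (auto simp: field_simps)
  have Ceps: "C * \<epsilon> \<le> 1/8" using C0 unfolding \<epsilon>_def by (simp add: field_simps)
  define T where "T = - ln \<epsilon>"
  have expT: "exp (- T) = \<epsilon>" unfolding T_def using eps0 by simp
  have T0: "T \<ge> 0" unfolding T_def using eps0 by simp
  define lm where "lm = T / \<delta>"
  define u where "u s = lm *\<^sub>R a s" for s
  define \<beta> where "\<beta> s l = lm * b s (Suc l)" for s l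
  define v where "v s l = (if l < k s then real (W s) else 0)" for s l
  define p where "p s x = (\<Sum>l=1..k s. v s l * sigmoid (u s \<bullet> x - \<beta> s l))" for s x
  define Sx where "Sx x = (\<Sum>s\<in>UNIV. p s x)" for x
  have approx: "\<bar>Sx (fst z) - real (V i)\<bar> \<le> 1/8" if "i \<in> mi" "z \<in> R i" for i z
  proof -
    have cs: "\<bar>p s (fst z) - real (W s) * real (i s - 1)\<bar> \<le> real (k s) * (real (W s) * \<epsilon>)" for s
    proof -
      have "\<bar>(\<Sum>l=1..k s. (if l < k s then real (W s) else 0) * sigmoid (lm * (a s \<bullet> fst z) - lm * b s (Suc l))) - real (W s) * real (i s - 1)\<bar>
          \<le> real (k s) * (real (W s) * \<epsilon>)"
        by (rule coord_approx[OF spec[OF bm, of s]]) (use that dpos T0 expT in \<open>auto simp: mi_def R_def lm_def\<close>)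
      then show ?thesis by (simp add: p_def v_def u_def \<beta>_def)
    qed
    have "real (V i) = (\<Sum>s\<in>UNIV. real (W s) * real (i s - 1))"
      unfolding V_def by (simp add: mult.commute)
    then have "\<bar>Sx (fst z) - real (V i)\<bar> = \<bar>\<Sum>s\<in>UNIV. (p s (fst z) - real (W s) * real (i s - 1))\<bar>"
      by (simp add: Sx_def sum_subtractf)
    also have "\<dots> \<le> (\<Sum>s\<in>UNIV. \<bar>p s (fst z) - real (W s) * real (i s - 1)\<bar>)" by (rule sum_abs)
    also have "\<dots> \<le> (\<Sum>s\<in>UNIV. real (k s) * (real (W s) * \<epsilon>))" by (intro sum_mono cs)
    also have "\<dots> = C * \<epsilon>" unfolding C_def by (simp add: sum_distrib_right mult.assoc)
    finally show ?thesis using Ceps by simp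
  qed
  define Pset where "Pset j = {z \<in> space D. real j - 5/4 < Sx (fst z) \<and> Sx (fst z) < real j - 3/4}" for j :: nat
  define PY where "PY j y = {z \<in> space D. real j - 5/4 < Sx (fst z) \<and> Sx (fst z) < real j - 3/4 \<and> snd z = y}" for j :: nat and y
  have inU_iff: "z \<in> Pset j \<longleftrightarrow> V i = j - 1" if "i \<in> mi" "z \<in> R i" "1 \<le> j" for i z j
  proof
    assume "z \<in> Pset j"
    then show "V i = j - 1" using int_lemma[OF approx[OF that(1,2)]] unfolding Pset_def by auto
  next
    assume "V i = j - 1"
    then have "real (V i) = real j - 1" using that(3) by simp
    moreover have h: "\<bar>Sx (fst z) - real (V i)\<bar> \<le> 1/8" by (rule approx[OF that(1,2)])
    ultimately have "real j - 5/4 < Sx (fst z)" "Sx (fst z) < real j - 3/4"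
      using abs_le_D1[OF h] abs_le_D2[OF h] by linarith+
    moreover have "z \<in> space D" using that(2) unfolding R_def by auto
    ultimately show "z \<in> Pset j" unfolding Pset_def by auto
  qed
  define F where "F = (\<lambda>z::((real^'d) \<times> nat). ((\<chi> s. p s (fst z)) :: real^'n, snd z))"
  have Fmeas: "F \<in> measurable D ?M"
  proof -
    have "(\<lambda>x. (\<chi> s. p s x) :: real^'n) \<in> borel_measurable borel"
      unfolding p_def by (rule meas_f)
    then have "(\<lambda>z. (\<chi> s. p s (fst z)) :: real^'n) \<in> borel_measurable ?N"
      by (rule measurable_compose[OF measurable_fst])
    then have "F \<in> measurable ?N ?M" unfolding F_def
      by (intro measurable_Pair) auto
    moreover have "measurable D ?M = measurable ?N ?M" by (rule measurable_cong_sets[OF assms(2) refl])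
    ultimately show ?thesis by simp
  qed
  define D' where "D' = distr D ?M F"
  have spD': "space D' = UNIV" by (simp add: D'_def space_pair_measure)
  have mD': "measure D' {w \<in> space D'. Q w} = measure D {z \<in> space D. Q (F z)}"
    if "{w \<in> space ?M. Q w} \<in> sets ?M" for Q
  proof -
    have "measure D' {w \<in> space ?M. Q w} = measure D (F -` {w \<in> space ?M. Q w} \<inter> space D)"
      unfolding D'_def by (rule measure_distr[OF Fmeas that])
    moreover have "F -` {w \<in> space ?M. Q w} \<inter> space D = {z \<in> space D. Q (F z)}" using spM by auto
    ultimately show ?thesis using spD' spM by simp
  qed
  have sx_meas[measurable]: "(\<lambda>z. Sx (fst z)) \<in> borel_measurable ?N"
    unfolding Sx_def p_def by measurable
  have PsetS: "Pset j \<in> sets D" for j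
    unfolding Pset_def spD spN[symmetric] by (rule setsD) measurable
  have PYS: "PY j y \<in> sets D" for j y
    unfolding PY_def spD spN[symmetric] by (rule setsD) measurable
  define q where "q = sqrt (real n)"
  have q0: "q > 0" unfolding q_def using npos by simp
  define a' where "a' = ((\<chi> s. 1 / q) :: real ^ 'n)"
  define \<delta>' where "\<delta>' = 1 / (4 * q)"
  define b' where "b' j = (real j - 3/2) / q" for j :: nat
  have ia: "a' \<bullet> w = (\<Sum>s\<in>UNIV. w $ s) / q" for w
    unfolding a'_def by (simp add: inner_vec_def sum_divide_distrib)
  have e1: "b' j + \<delta>' = (real j - 5/4) / q" for j unfolding b'_def \<delta>'_def using q0 by (simp add: field_simps)
  have e2: "b' (Suc j) - \<delta>' = (real j - 3/4) / q" for j unfolding b'_def \<delta>'_def using q0 by (simp add: field_simps)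
  have lo: "b' j + \<delta>' < x / q \<longleftrightarrow> real j - 5/4 < x" for j x
    unfolding e1 using q0 by (simp add: divide_less_cancel)
  have hi: "x / q < b' (Suc j) - \<delta>' \<longleftrightarrow> x < real j - 3/4" for j x
    unfolding e2 using q0 by (simp add: divide_less_cancel)
  have aF: "a' \<bullet> fst (F z) = Sx (fst z) / q" for z unfolding ia F_def Sx_def by simp
  have sndF: "snd (F z) = snd z" for z unfolding F_def by simp
  have main: "k_separable_by D' (\<Prod>s\<in>UNIV. k s) \<delta>' a'"
    unfolding k_separable_by_def
  proof (intro conjI exI[of _ b'])
    show "\<delta>' > 0" unfolding \<delta>'_def using q0 by simp
    show "norm a' = 1"
    proof -
      have "(\<Sum>s\<in>(UNIV::'n set). (1 / q)\<^sup>2) = real n * (1/q)\<^sup>2" by (simp add: n_def)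
      also have "\<dots> = 1" unfolding q_def using npos by (simp add: power_divide)
      finally show ?thesis unfolding a'_def norm_vec_def L2_set_def using q0 by simp
    qed
    show "\<forall>j\<in>{1..\<Prod>s\<in>UNIV. k s}. b' j < b' (Suc j)" unfolding b'_def using q0
      by (simp add: divide_strict_right_mono)
    show "\<forall>i\<in>{1..\<Prod>s\<in>UNIV. k s}. \<exists>yi.
      measure D' {z \<in> space D'. b' i + \<delta>' < a' \<bullet> fst z \<and> a' \<bullet> fst z < b' (Suc i) - \<delta>' \<and> snd z = yi} =
      measure D' {z \<in> space D'. b' i + \<delta>' < a' \<bullet> fst z \<and> a' \<bullet> fst z < b' (Suc i) - \<delta>'}"
    proof
      fix j assume j: "j \<in> {1..\<Prod>s\<in>UNIV. k s}"
      have r1: "measure D' {z \<in> space D'. b' j + \<delta>' < a' \<bullet> fst z \<and> a' \<bullet> fst z < b' (Suc j) - \<delta>' \<and> snd z = y}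
           = measure D (PY j y)" for y
      proof -
        have "measure D' {z \<in> space D'. b' j + \<delta>' < a' \<bullet> fst z \<and> a' \<bullet> fst z < b' (Suc j) - \<delta>' \<and> snd z = y}
            = measure D {z \<in> space D. b' j + \<delta>' < a' \<bullet> fst (F z) \<and> a' \<bullet> fst (F z) < b' (Suc j) - \<delta>' \<and> snd (F z) = y}"
          by (rule mD') measurable
        also have "\<dots> = measure D (PY j y)" unfolding PY_def by (simp only: aF lo hi sndF)
        finally show ?thesis .
      qed
      have r2: "measure D' {z \<in> space D'. b' j + \<delta>' < a' \<bullet> fst z \<and> a' \<bullet> fst z < b' (Suc j) - \<delta>'}
           = measure D (Pset j)"
      proof -
        have "measure D' {z \<in> space D'. b' j + \<delta>' < a' \<bullet> fst z \<and> a' \<bullet> fst z < b' (Suc j) - \<delta>'}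
            = measure D {z \<in> space D. b' j + \<delta>' < a' \<bullet> fst (F z) \<and> a' \<bullet> fst (F z) < b' (Suc j) - \<delta>'}"
          by (rule mD') measurable
        also have "\<dots> = measure D (Pset j)" unfolding Pset_def by (simp only: aF lo hi sndF)
        finally show ?thesis .
      qed
      have j1: "1 \<le> j" using j by simp
      show "\<exists>yi. measure D' {z \<in> space D'. b' j + \<delta>' < a' \<bullet> fst z \<and> a' \<bullet> fst z < b' (Suc j) - \<delta>' \<and> snd z = yi} =
        measure D' {z \<in> space D'. b' j + \<delta>' < a' \<bullet> fst z \<and> a' \<bullet> fst z < b' (Suc j) - \<delta>'}"
        (is "\<exists>yi. ?L yi = ?R")
      proof -
      have ex: "\<exists>yi. measure D (PY j yi) = measure D (Pset j)"
      proof (cases "\<exists>i\<in>mi. V i = j - 1")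
        case True
        then obtain i where i: "i \<in> mi" "V i = j - 1" by blast
        obtain yi where yi: "measure D (RY i yi) = measure D (R i)"
          using blab[rule_format, of i] i(1) unfolding mi_def RY_def R_def by auto
        have key: "z \<in> Pset j \<longleftrightarrow> z \<in> R i" if zU: "z \<in> U" for z
        proof -
          obtain i' where i': "i' \<in> mi" "z \<in> R i'" using zU unfolding U_def by auto
          have "z \<in> Pset j \<longleftrightarrow> V i' = j - 1" by (rule inU_iff[OF i' j1])
          also have "\<dots> \<longleftrightarrow> i' = i" using Vinj[OF i'(1) i(1)] i(2) by auto
          also have "\<dots> \<longleftrightarrow> z \<in> R i"
          proof
            assume "z \<in> R i"
            then have "V i = j - 1 \<longleftrightarrow> z \<in> Pset j" using inU_iff[OF i(1) _ j1] by blast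
            then show "i' = i" using \<open>z \<in> R i\<close> i(2) \<open>(z \<in> Pset j) = (V i' = j - 1)\<close>
              using Vinj[OF i'(1) i(1)] by auto
          qed (use i' in simp)
          finally show ?thesis .
        qed
        have RU: "R i \<subseteq> U" using i(1) unfolding U_def R_def by auto
        have e1: "Pset j \<inter> U = R i" using key RU unfolding Pset_def by blast
        have e2: "PY j yi \<inter> U = RY i yi"
        proof -
          have "PY j yi = Pset j \<inter> {z. snd z = yi}" "RY i yi = R i \<inter> {z. snd z = yi}"
            unfolding PY_def Pset_def RY_def R_def by auto
          then show ?thesis using e1 by auto
        qed
        have "measure D (PY j yi) = measure D (PY j yi \<inter> U)"
          using full_inter[OF assms(1) Usets mU PYS] by simp
        also have "\<dots> = measure D (R i)" using e2 yi by simp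
        also have "\<dots> = measure D (Pset j \<inter> U)" using e1 by simp
        also have "\<dots> = measure D (Pset j)" using full_inter[OF assms(1) Usets mU PsetS] by simp
        finally have "measure D (PY j yi) = measure D (Pset j)" .
        then show ?thesis by blast
      next
        case False
        have e1: "Pset j \<inter> U = {}"
        proof -
          have "z \<notin> Pset j" if zU: "z \<in> U" for z
          proof -
            obtain i' where i': "i' \<in> mi" "z \<in> R i'" using zU unfolding U_def by auto
            show ?thesis using inU_iff[OF i' j1] False i'(1) by blast
          qed
          then show ?thesis by blast
        qed
        have e2: "PY j 0 \<inter> U = {}" using e1 unfolding PY_def Pset_def by blast
        have "measure D (PY j 0) = 0"
          using full_inter[OF assms(1) Usets mU PYS, of j 0] e2 by simp
        moreover have "measure D (Pset j) = 0"
          using full_inter[OF assms(1) Usets mU PsetS, of j] e1 by simp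
        ultimately show ?thesis by metis
      qed
      then obtain yi where yi: "measure D (PY j yi) = measure D (Pset j)" by blast
      have "?L yi = ?R" using r1[of yi] r2 yi by simp
      then show ?thesis by blast
      qed
    qed
    show "measure D' {z \<in> space D'. \<exists>i\<in>{1..\<Prod>s\<in>UNIV. k s}. b' i + \<delta>' < a' \<bullet> fst z \<and> a' \<bullet> fst z < b' (Suc i) - \<delta>'} = 1"
    proof -
      define K where "K = (\<Prod>s\<in>UNIV. k s)"
      define Q where "Q = {z \<in> space D. \<exists>j\<in>{1..K}. real j - 5/4 < Sx (fst z) \<and> Sx (fst z) < real j - 3/4}"
      have QS: "Q \<in> sets D" unfolding Q_def spD spN[symmetric] by (rule setsD) measurable
      have "measure D' {z \<in> space D'. \<exists>i\<in>{1..K}. b' i + \<delta>' < a' \<bullet> fst z \<and> a' \<bullet> fst z < b' (Suc i) - \<delta>'}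
          = measure D {z \<in> space D. \<exists>i\<in>{1..K}. b' i + \<delta>' < a' \<bullet> fst (F z) \<and> a' \<bullet> fst (F z) < b' (Suc i) - \<delta>'}"
        by (rule mD') measurable
      also have "\<dots> = measure D Q" unfolding Q_def by (simp only: aF lo hi sndF)
      finally have mq: "measure D' {z \<in> space D'. \<exists>i\<in>{1..K}. b' i + \<delta>' < a' \<bullet> fst z \<and> a' \<bullet> fst z < b' (Suc i) - \<delta>'} = measure D Q" .
      have UQ: "U \<subseteq> Q"
      proof
        fix z assume "z \<in> U"
        then obtain i where i: "i \<in> mi" "z \<in> R i" unfolding U_def by auto
        have "z \<in> Pset (V i + 1)" using inU_iff[OF i, of "V i + 1"] by simp
        moreover have "V i + 1 \<in> {1..K}" using Vlt[OF i(1)] unfolding K_def by simp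
        ultimately show "z \<in> Q" unfolding Q_def Pset_def by blast
      qed
      have "1 \<le> measure D Q" using P.finite_measure_mono[OF UQ QS] mU by simp
      moreover have "measure D Q \<le> 1" by (rule P.prob_le_1)
      ultimately show ?thesis using mq unfolding K_def by simp
    qed
  qed
  have "k_separable_by (distr D ?M (\<lambda>z. ((\<chi> s. \<Sum>l=1..k s. v s l * sigmoid (u s \<bullet> fst z - \<beta> s l)) :: real^'n, snd z)))
      (\<Prod>s\<in>UNIV. k s) (1 / (4 * sqrt (real CARD('n)))) ((\<chi> s. 1 / sqrt (real CARD('n))) :: real^'n)"
    using main unfolding D'_def F_def p_def a'_def \<delta>'_def q_def n_def .
  then show ?thesis by (intro exI)
qed

end
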